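(* Let $G'$ and $G''$ be two bridgeless cubic graphs that are not 3-edge-colorable. If $G$ is a 2-junction of $G'$ and $G''$, then $\mu_3(G)=\mu_3(G')+\mu_3(G'')$.
   Context: Graphs may have multiple edges. A 1-factor is a spanning 1-regular subgraph. For a cubic graph $H$ and 1-factors $M_1,M_2,M_3$ of $H$, an edge is uncovered if it lies in none of $M_1,M_2,M_3$; $\mu_3(H)$ is the minimum number of uncovered edges over all lists (with possible repetition) of three 1-factors of $H$. A $\mu_3(H)$-core is the subgraph of $H$ induced by the edges lying in none or in at least two of $M_1,M_2,M_3$, for some $M_1,M_2,M_3$ with exactly $\mu_3(H)$ uncovered edges. A 2-junction of $G'$ and $G''$: let $e'=xy$ be an uncovered edge of a $\mu_3(G')$-core of $G'$ and $e''=uv$ an uncovered edge of a $\mu_3(G'')$-core of $G''$; the 2-junction is the graph $G$ with $V(G)=V(G')\cup V(G'')$ and $E(G)=(E(G')\cup E(G'')\cup\{ux,vy\})\setminus\{e',e''\}$. *)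

theory Defs
  imports Main
begin

text \<open>A finite loopless multigraph is given by a vertex set V, an edge set E
(edges are abstract objects, so parallel edges are allowed) and an incidence
map ends assigning to each edge its two distinct end vertices.\<close>

definition multigraph :: "'v set \<Rightarrow> 'e set \<Rightarrow> ('e \<Rightarrow> 'v set) \<Rightarrow> bool" where
  "multigraph V E ends \<longleftrightarrow> finite V \<and> finite E \<and>
     (\<forall>e\<in>E. ends e \<subseteq> V \<and> card (ends e) = 2)"

definition incident :: "'e set \<Rightarrow> ('e \<Rightarrow> 'v set) \<Rightarrow> 'v \<Rightarrow> 'e set" where
  "incident E ends v = {e\<in>E. v \<in> ends e}"

definition cubic :: "'v set \<Rightarrow> 'e set \<Rightarrow> ('e \<Rightarrow> 'v set) \<Rightarrow> bool" where
  "cubic V E ends \<longleftrightarrow> multigraph V E ends \<and> (\<forall>v\<in>V. card (incident E ends v) = 3)"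

definition adj :: "'e set \<Rightarrow> ('e \<Rightarrow> 'v set) \<Rightarrow> 'v \<Rightarrow> 'v \<Rightarrow> bool" where
  "adj E ends a b \<longleftrightarrow> (\<exists>e\<in>E. ends e = {a, b})"

definition bridgeless :: "'v set \<Rightarrow> 'e set \<Rightarrow> ('e \<Rightarrow> 'v set) \<Rightarrow> bool" where
  "bridgeless V E ends \<longleftrightarrow>
     (\<forall>e\<in>E. \<forall>a b. ends e = {a, b} \<longrightarrow> (adj (E - {e}) ends)\<^sup>*\<^sup>* a b)"

definition three_edge_colorable :: "'v set \<Rightarrow> 'e set \<Rightarrow> ('e \<Rightarrow> 'v set) \<Rightarrow> bool" where
  "three_edge_colorable V E ends \<longleftrightarrow>
     (\<exists>c :: 'e \<Rightarrow> nat. (\<forall>e\<in>E. c e < 3) \<and>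
        (\<forall>e1\<in>E. \<forall>e2\<in>E. e1 \<noteq> e2 \<and> ends e1 \<inter> ends e2 \<noteq> {} \<longrightarrow> c e1 \<noteq> c e2))"

definition one_factor :: "'v set \<Rightarrow> 'e set \<Rightarrow> ('e \<Rightarrow> 'v set) \<Rightarrow> 'e set \<Rightarrow> bool" where
  "one_factor V E ends M \<longleftrightarrow> M \<subseteq> E \<and> (\<forall>v\<in>V. card (incident M ends v) = 1)"

definition uncovered :: "'e set \<Rightarrow> 'e set \<Rightarrow> 'e set \<Rightarrow> 'e set \<Rightarrow> 'e set" where
  "uncovered E M1 M2 M3 = E - (M1 \<union> M2 \<union> M3)"

definition mu3 :: "'v set \<Rightarrow> 'e set \<Rightarrow> ('e \<Rightarrow> 'v set) \<Rightarrow> nat" where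
  "mu3 V E ends = Min {card (uncovered E M1 M2 M3) | M1 M2 M3.
      one_factor V E ends M1 \<and> one_factor V E ends M2 \<and> one_factor V E ends M3}"

definition core_edges :: "'e set \<Rightarrow> 'e set \<Rightarrow> 'e set \<Rightarrow> 'e set \<Rightarrow> 'e set" where
  "core_edges E M1 M2 M3 = {e\<in>E. card {i::nat. i < 3 \<and> e \<in> [M1, M2, M3] ! i} \<noteq> 1}"

definition uncovered_edge_of_mu3_core :: "'v set \<Rightarrow> 'e set \<Rightarrow> ('e \<Rightarrow> 'v set) \<Rightarrow> 'e \<Rightarrow> bool" where
  "uncovered_edge_of_mu3_core V E ends e \<longleftrightarrow>
     (\<exists>M1 M2 M3. one_factor V E ends M1 \<and> one_factor V E ends M2 \<and> one_factor V E ends M3 \<and>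
        card (uncovered E M1 M2 M3) = mu3 V E ends \<and>
        e \<in> core_edges E M1 M2 M3 \<and> e \<in> uncovered E M1 M2 M3)"

definition two_junction ::
  "'v set \<Rightarrow> 'e set \<Rightarrow> ('e \<Rightarrow> 'v set) \<Rightarrow>
   'v set \<Rightarrow> 'e set \<Rightarrow> ('e \<Rightarrow> 'v set) \<Rightarrow>
   'v set \<Rightarrow> 'e set \<Rightarrow> ('e \<Rightarrow> 'v set) \<Rightarrow> bool" where
  "two_junction V E ends V1 E1 ends1 V2 E2 ends2 \<longleftrightarrow>
     V1 \<inter> V2 = {} \<and> E1 \<inter> E2 = {} \<and>
     (\<exists>e1 e2 x y u v f1 f2.
        e1 \<in> E1 \<and> ends1 e1 = {x, y} \<and> uncovered_edge_of_mu3_core V1 E1 ends1 e1 \<and>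
        e2 \<in> E2 \<and> ends2 e2 = {u, v} \<and> uncovered_edge_of_mu3_core V2 E2 ends2 e2 \<and>
        f1 \<notin> E1 \<union> E2 \<and> f2 \<notin> E1 \<union> E2 \<and> f1 \<noteq> f2 \<and>
        V = V1 \<union> V2 \<and>
        E = (E1 \<union> E2 \<union> {f1, f2}) - {e1, e2} \<and>
        (\<forall>e\<in>E1 - {e1}. ends e = ends1 e) \<and>
        (\<forall>e\<in>E2 - {e2}. ends e = ends2 e) \<and>
        ends f1 = {u, x} \<and> ends f2 = {v, y})"

end

theory Submission
  imports Defs
begin


lemma handshake:
  assumes "finite W" "finite F" "\<forall>e\<in>F. ends e \<subseteq> W \<and> card (ends e) = 2"
  shows "(\<Sum>w\<in>W. card (incident F ends w)) = 2 * card F"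
proof -
  have "(\<Sum>w\<in>W. card (incident F ends w)) = (\<Sum>w\<in>W. \<Sum>e\<in>F. if w \<in> ends e then 1 else 0)"
    unfolding incident_def using assms(2) by (simp add: sum.If_cases Int_def)
  also have "\<dots> = (\<Sum>e\<in>F. \<Sum>w\<in>W. if w \<in> ends e then 1 else 0)" by (rule sum.swap)
  also have "\<dots> = (\<Sum>e\<in>F. (2::nat))"
  proof (rule sum.cong)
    fix e assume "e \<in> F"
    then have "W \<inter> ends e = ends e" "card (ends e) = 2" using assms(3) by auto
    then show "(\<Sum>w\<in>W. if w \<in> ends e then 1 else 0) = (2::nat)"
      using assms(1) by (simp add: sum.If_cases)
  qed simp
  finally show ?thesis by simp
qed

lemma side:
  assumes fin: "finite V1" "finite E1" and ends: "\<forall>e\<in>E1. ends1 e \<subseteq> V1 \<and> card (ends1 e) = 2"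
  and A: "one_factor V1 E1 ends1 A"
  and e1: "e1 \<in> E1" "ends1 e1 = {x,y}" "x \<noteq> y"
  and N: "N \<subseteq> E1 - {e1}"
  and fnot: "f1 \<notin> N" "f2 \<notin> N" "f1 \<noteq> f2"
  and H: "\<forall>w\<in>V1. incident M ends w = incident N ends1 w \<union> (if w = x \<and> a then {f1} else {})
              \<union> (if w = y \<and> b then {f2} else {})"
  and one: "\<forall>w\<in>V1. card (incident M ends w) = 1"
  shows "a = b" and "one_factor V1 E1 ends1 (if a then insert e1 N else N)"
proof -
  have xy: "x \<in> V1" "y \<in> V1" using ends e1 by auto
  have finN: "finite N" using N fin finite_subset by blast
  have finI: "finite (incident N ends1 w)" for w using finN unfolding incident_def by simp
  have c: "card (incident N ends1 w) + (if w = x \<and> a then 1 else 0) + (if w = y \<and> b then 1 else 0) = 1"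
    if "w \<in> V1" for w
  proof -
    have "card (incident M ends w) = card (incident N ends1 w \<union> (if w = x \<and> a then {f1} else {})
              \<union> (if w = y \<and> b then {f2} else {}))" using H that by simp
    also have "\<dots> = card (incident N ends1 w) + (if w = x \<and> a then 1 else 0) + (if w = y \<and> b then 1 else 0)"
      using finI[of w] fnot unfolding incident_def by (auto simp: card_insert_if)
    finally show ?thesis using one that by simp
  qed
  have sA: "(\<Sum>w\<in>V1. card (incident A ends1 w)) = 2 * card A"
    apply (rule handshake) using fin A ends unfolding one_factor_def by (auto intro: finite_subset)
  have "(\<Sum>w\<in>V1. card (incident A ends1 w)) = card V1" using A unfolding one_factor_def by simp
  moreover have sN: "(\<Sum>w\<in>V1. card (incident N ends1 w)) = 2 * card N"
    apply (rule handshake) using fin N ends finN by auto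
  moreover have "(\<Sum>w\<in>V1. card (incident N ends1 w) + (if w = x \<and> a then 1 else 0) + (if w = y \<and> b then 1 else 0)) = card V1"
    using c by simp
  moreover have "(\<Sum>w\<in>V1. (if w = x \<and> a then 1 else 0)) = (if a then 1 else (0::nat))"
    using xy fin by (cases a; cases b; simp)
  moreover have "(\<Sum>w\<in>V1. (if w = y \<and> b then 1 else 0)) = (if b then 1 else (0::nat))"
    using xy fin by (cases a; cases b; simp)
  ultimately have "2 * card N + (if a then 1 else 0) + (if b then 1 else 0) = 2 * card A"
    using sA by (simp add: sum.distrib)
  then show ab: "a = b" by (cases a; cases b; simp; presburger)
  show "one_factor V1 E1 ends1 (if a then insert e1 N else N)"
    unfolding one_factor_def
  proof (intro conjI ballI)
    show "(if a then insert e1 N else N) \<subseteq> E1" using N e1 by auto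
  next
    fix w assume w: "w \<in> V1"
    show "card (incident (if a then insert e1 N else N) ends1 w) = 1"
    proof (cases a)
      case True
      have "incident (insert e1 N) ends1 w = insert e1 (incident N ends1 w)" if "w = x \<or> w = y"
        using that e1 unfolding incident_def by auto
      moreover have "incident (insert e1 N) ends1 w = incident N ends1 w" if "\<not> (w = x \<or> w = y)"
        using that e1 unfolding incident_def by auto
      moreover have "e1 \<notin> incident N ends1 w" using N unfolding incident_def by auto
      ultimately show ?thesis using c[OF w] True ab finI[of w] e1(3) by (auto split: if_splits)
    next
      case False
      then show ?thesis using c[OF w] ab by simp
    qed
  qed
qed

lemma mu3_le:
  assumes "finite E" "one_factor V E ends M1" "one_factor V E ends M2" "one_factor V E ends M3"
  shows "mu3 V E ends \<le> card (uncovered E M1 M2 M3)"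
proof -
  have "{card (uncovered E M1 M2 M3) | M1 M2 M3.
      one_factor V E ends M1 \<and> one_factor V E ends M2 \<and> one_factor V E ends M3} \<subseteq> card ` Pow E"
    unfolding uncovered_def by auto
  then have "finite {card (uncovered E M1 M2 M3) | M1 M2 M3.
      one_factor V E ends M1 \<and> one_factor V E ends M2 \<and> one_factor V E ends M3}"
    using assms(1) finite_subset by blast
  then show ?thesis unfolding mu3_def by (rule Min_le) (use assms in blast)
qed



theorem mainTheorem7:
  fixes V1 V2 V :: "'v set" and E1 E2 E :: "'e set"
    and ends1 ends2 ends :: "'e \<Rightarrow> 'v set"
  assumes "cubic V1 E1 ends1" "bridgeless V1 E1 ends1" "\<not> three_edge_colorable V1 E1 ends1"
    and "cubic V2 E2 ends2" "bridgeless V2 E2 ends2" "\<not> three_edge_colorable V2 E2 ends2"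
    and "two_junction V E ends V1 E1 ends1 V2 E2 ends2"
  shows "mu3 V E ends = mu3 V1 E1 ends1 + mu3 V2 E2 ends2"
proof -
  have g1: "finite V1" "finite E1" "\<forall>e\<in>E1. ends1 e \<subseteq> V1 \<and> card (ends1 e) = 2"
    using assms(1) unfolding cubic_def multigraph_def by auto
  have g2: "finite V2" "finite E2" "\<forall>e\<in>E2. ends2 e \<subseteq> V2 \<and> card (ends2 e) = 2"
    using assms(4) unfolding cubic_def multigraph_def by auto
  from assms(7) obtain e1 e2 x y u v f1 f2 where
    disj: "V1 \<inter> V2 = {}" "E1 \<inter> E2 = {}" and
    j: "e1 \<in> E1" "ends1 e1 = {x, y}" "uncovered_edge_of_mu3_core V1 E1 ends1 e1"
       "e2 \<in> E2" "ends2 e2 = {u, v}" "uncovered_edge_of_mu3_core V2 E2 ends2 e2"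
       "f1 \<notin> E1 \<union> E2" "f2 \<notin> E1 \<union> E2" "f1 \<noteq> f2"
       "V = V1 \<union> V2" and
    Edef: "E = (E1 \<union> E2 \<union> {f1, f2}) - {e1, e2}" and
    en1: "\<forall>e\<in>E1 - {e1}. ends e = ends1 e" and
    en2: "\<forall>e\<in>E2 - {e2}. ends e = ends2 e" and
    ef: "ends f1 = {u, x}" "ends f2 = {v, y}"
    unfolding two_junction_def by blast
  from j(3) obtain A1 A2 A3 where
    A: "one_factor V1 E1 ends1 A1" "one_factor V1 E1 ends1 A2" "one_factor V1 E1 ends1 A3"
       "card (uncovered E1 A1 A2 A3) = mu3 V1 E1 ends1" "e1 \<in> uncovered E1 A1 A2 A3"
    unfolding uncovered_edge_of_mu3_core_def by blast
  from j(6) obtain B1 B2 B3 where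
    B: "one_factor V2 E2 ends2 B1" "one_factor V2 E2 ends2 B2" "one_factor V2 E2 ends2 B3"
       "card (uncovered E2 B1 B2 B3) = mu3 V2 E2 ends2" "e2 \<in> uncovered E2 B1 B2 B3"
    unfolding uncovered_edge_of_mu3_core_def by blast
  have xy: "x \<in> V1" "y \<in> V1" "x \<noteq> y" using g1 j(1,2) by fastforce+
  have uv: "u \<in> V2" "v \<in> V2" "u \<noteq> v" using g2 j(4,5) by fastforce+
  have finE: "finite E" using Edef g1 g2 by simp
  have nE: "e1 \<notin> E" "e2 \<notin> E" "e1 \<notin> E2" "e2 \<notin> E1" using Edef disj j by auto
  have oneM: "one_factor V E ends (A \<union> B)"
    if oA: "one_factor V1 E1 ends1 A" "e1 \<notin> A" and oB: "one_factor V2 E2 ends2 B" "e2 \<notin> B" for A B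
    unfolding one_factor_def
  proof (intro conjI ballI)
    show "A \<union> B \<subseteq> E" using oA oB nE unfolding one_factor_def Edef by auto
  next
    fix w assume w: "w \<in> V"
    show "card (incident (A \<union> B) ends w) = 1"
    proof (cases "w \<in> V1")
      case True
      have "incident (A \<union> B) ends w = incident A ends1 w"
      proof (rule set_eqI)
        fix e
        show "e \<in> incident (A \<union> B) ends w \<longleftrightarrow> e \<in> incident A ends1 w"
        proof (cases "e \<in> A")
          case True then show ?thesis using oA en1 unfolding incident_def one_factor_def by auto
        next
          case False
          then have "e \<in> B \<Longrightarrow> ends e \<subseteq> V2" using oB en2 g2 unfolding one_factor_def by auto
          then show ?thesis using False disj \<open>w \<in> V1\<close> unfolding incident_def by auto
        qed
      qed
      then show ?thesis using oA True unfolding one_factor_def by simp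
    next
      case False
      then have w2: "w \<in> V2" using w j(10) by auto
      have "incident (A \<union> B) ends w = incident B ends2 w"
      proof (rule set_eqI)
        fix e
        show "e \<in> incident (A \<union> B) ends w \<longleftrightarrow> e \<in> incident B ends2 w"
        proof (cases "e \<in> B")
          case True then show ?thesis using oB en2 unfolding incident_def one_factor_def by auto
        next
          case False
          then have "e \<in> A \<Longrightarrow> ends e \<subseteq> V1" using oA en1 g1 unfolding one_factor_def by auto
          then show ?thesis using False disj w2 unfolding incident_def by auto
        qed
      qed
      then show ?thesis using oB w2 unfolding one_factor_def by simp
    qed
  qed
  have eA: "e1 \<notin> A1" "e1 \<notin> A2" "e1 \<notin> A3" using A(5) unfolding uncovered_def by auto
  have eB: "e2 \<notin> B1" "e2 \<notin> B2" "e2 \<notin> B3" using B(5) unfolding uncovered_def by auto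
  have M: "one_factor V E ends (A1 \<union> B1)" "one_factor V E ends (A2 \<union> B2)" "one_factor V E ends (A3 \<union> B3)"
    using oneM A B eA eB by auto
  have UAsub: "uncovered E1 A1 A2 A3 \<subseteq> E1" "uncovered E2 B1 B2 B3 \<subseteq> E2" unfolding uncovered_def by auto
  have Ueq: "uncovered E (A1 \<union> B1) (A2 \<union> B2) (A3 \<union> B3) =
     (uncovered E1 A1 A2 A3 - {e1}) \<union> (uncovered E2 B1 B2 B3 - {e2}) \<union> {f1, f2}"
  proof -
    have "A1 \<subseteq> E1" "A2 \<subseteq> E1" "A3 \<subseteq> E1" "B1 \<subseteq> E2" "B2 \<subseteq> E2" "B3 \<subseteq> E2"
      using A(1-3) B(1-3) unfolding one_factor_def by auto
    then show ?thesis using disj j(1,4,7,8,9) nE unfolding uncovered_def Edef by auto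
  qed
  have finU: "finite (uncovered E1 A1 A2 A3)" "finite (uncovered E2 B1 B2 B3)"
    using UAsub g1(2) g2(2) by (auto intro: finite_subset)
  have cardU: "card (uncovered E (A1 \<union> B1) (A2 \<union> B2) (A3 \<union> B3)) = mu3 V1 E1 ends1 + mu3 V2 E2 ends2"
  proof -
    have d1: "(uncovered E1 A1 A2 A3 - {e1}) \<inter> (uncovered E2 B1 B2 B3 - {e2}) = {}"
      using UAsub disj by auto
    have d2: "((uncovered E1 A1 A2 A3 - {e1}) \<union> (uncovered E2 B1 B2 B3 - {e2})) \<inter> {f1, f2} = {}"
      using UAsub j(7,8) by auto
    have "card (uncovered E (A1 \<union> B1) (A2 \<union> B2) (A3 \<union> B3)) =
       card (uncovered E1 A1 A2 A3 - {e1}) + card (uncovered E2 B1 B2 B3 - {e2}) + 2"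
      unfolding Ueq using d1 d2 finU j(9) by (simp add: card_Un_disjoint)
    moreover have "card (uncovered E1 A1 A2 A3) \<ge> 1" "card (uncovered E2 B1 B2 B3) \<ge> 1"
      using A(5) B(5) finU by (auto simp: Suc_le_eq card_gt_0_iff)
    ultimately show ?thesis using A(4) B(4) A(5) B(5) finU by simp
  qed
  have per: "(f1 \<in> M \<longleftrightarrow> f2 \<in> M) \<and>
      one_factor V1 E1 ends1 (if f1 \<in> M then insert e1 (M \<inter> E1) else M \<inter> E1) \<and>
      one_factor V2 E2 ends2 (if f1 \<in> M then insert e2 (M \<inter> E2) else M \<inter> E2)"
    if oM: "one_factor V E ends M" for M
  proof -
    have ME: "M \<subseteq> E" using oM unfolding one_factor_def by auto
    have one1: "\<forall>w\<in>V1. card (incident M ends w) = 1" and one2: "\<forall>w\<in>V2. card (incident M ends w) = 1"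
      using oM j(10) unfolding one_factor_def by auto
    have H1: "\<forall>w\<in>V1. incident M ends w = incident (M \<inter> E1) ends1 w \<union> (if w = x \<and> f1 \<in> M then {f1} else {})
              \<union> (if w = y \<and> f2 \<in> M then {f2} else {})"
    proof
      fix w assume w: "w \<in> V1"
      show "incident M ends w = incident (M \<inter> E1) ends1 w \<union> (if w = x \<and> f1 \<in> M then {f1} else {})
              \<union> (if w = y \<and> f2 \<in> M then {f2} else {})"
      proof (rule set_eqI)
        fix e
        have "e \<in> M \<Longrightarrow> e \<in> E1 - {e1} \<or> e \<in> E2 - {e2} \<or> e = f1 \<or> e = f2" using ME Edef by auto
        moreover have "e \<in> E2 \<Longrightarrow> e \<noteq> e2 \<Longrightarrow> w \<notin> ends e" using en2 g2(3) disj w by blast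
        moreover have "w \<in> ends f1 \<longleftrightarrow> w = x" "w \<in> ends f2 \<longleftrightarrow> w = y" using ef uv xy disj w by auto
        ultimately show "e \<in> incident M ends w \<longleftrightarrow> e \<in> incident (M \<inter> E1) ends1 w \<union> (if w = x \<and> f1 \<in> M then {f1} else {})
              \<union> (if w = y \<and> f2 \<in> M then {f2} else {})"
          using en1 j(7,8) nE unfolding incident_def by auto
      qed
    qed
    have H2: "\<forall>w\<in>V2. incident M ends w = incident (M \<inter> E2) ends2 w \<union> (if w = u \<and> f1 \<in> M then {f1} else {})
              \<union> (if w = v \<and> f2 \<in> M then {f2} else {})"
    proof
      fix w assume w: "w \<in> V2"
      show "incident M ends w = incident (M \<inter> E2) ends2 w \<union> (if w = u \<and> f1 \<in> M then {f1} else {})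
              \<union> (if w = v \<and> f2 \<in> M then {f2} else {})"
      proof (rule set_eqI)
        fix e
        have "e \<in> M \<Longrightarrow> e \<in> E1 - {e1} \<or> e \<in> E2 - {e2} \<or> e = f1 \<or> e = f2" using ME Edef by auto
        moreover have "e \<in> E1 \<Longrightarrow> e \<noteq> e1 \<Longrightarrow> w \<notin> ends e" using en1 g1(3) disj w by blast
        moreover have "w \<in> ends f1 \<longleftrightarrow> w = u" "w \<in> ends f2 \<longleftrightarrow> w = v" using ef uv xy disj w by auto
        ultimately show "e \<in> incident M ends w \<longleftrightarrow> e \<in> incident (M \<inter> E2) ends2 w \<union> (if w = u \<and> f1 \<in> M then {f1} else {})
              \<union> (if w = v \<and> f2 \<in> M then {f2} else {})"
          using en2 j(7,8) nE unfolding incident_def by auto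
      qed
    qed
    have N1: "M \<inter> E1 \<subseteq> E1 - {e1}" "f1 \<notin> M \<inter> E1" "f2 \<notin> M \<inter> E1" using nE j(7,8) ME by auto
    have N2: "M \<inter> E2 \<subseteq> E2 - {e2}" "f1 \<notin> M \<inter> E2" "f2 \<notin> M \<inter> E2" using nE j(7,8) ME by auto
    note s1 = side[OF g1 A(1) j(1) j(2) xy(3) N1 j(9) H1 one1]
    note s2 = side[OF g2 B(1) j(4) j(5) uv(3) N2 j(9) H2 one2]
    show ?thesis using s1 s2 by simp
  qed
  have lower: "mu3 V1 E1 ends1 + mu3 V2 E2 ends2 \<le> card (uncovered E M1 M2 M3)"
    if oM: "one_factor V E ends M1" "one_factor V E ends M2" "one_factor V E ends M3" for M1 M2 M3
  proof -
    define N1 where "N1 = (if f1 \<in> M1 then insert e1 (M1 \<inter> E1) else M1 \<inter> E1)"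
    define N2 where "N2 = (if f1 \<in> M2 then insert e1 (M2 \<inter> E1) else M2 \<inter> E1)"
    define N3 where "N3 = (if f1 \<in> M3 then insert e1 (M3 \<inter> E1) else M3 \<inter> E1)"
    define P1 where "P1 = (if f1 \<in> M1 then insert e2 (M1 \<inter> E2) else M1 \<inter> E2)"
    define P2 where "P2 = (if f1 \<in> M2 then insert e2 (M2 \<inter> E2) else M2 \<inter> E2)"
    define P3 where "P3 = (if f1 \<in> M3 then insert e2 (M3 \<inter> E2) else M3 \<inter> E2)"
    note p1 = per[OF oM(1)] and p2 = per[OF oM(2)] and p3 = per[OF oM(3)]
    have ME: "M1 \<subseteq> E" "M2 \<subseteq> E" "M3 \<subseteq> E" using oM unfolding one_factor_def by auto
    have ff: "f1 \<in> M1 \<longleftrightarrow> f2 \<in> M1" "f1 \<in> M2 \<longleftrightarrow> f2 \<in> M2" "f1 \<in> M3 \<longleftrightarrow> f2 \<in> M3" using p1 p2 p3 by auto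
    have m1: "mu3 V1 E1 ends1 \<le> card (uncovered E1 N1 N2 N3)"
      apply (rule mu3_le[OF g1(2)]) using p1 p2 p3 unfolding N1_def N2_def N3_def by auto
    have m2: "mu3 V2 E2 ends2 \<le> card (uncovered E2 P1 P2 P3)"
      apply (rule mu3_le[OF g2(2)]) using p1 p2 p3 unfolding P1_def P2_def P3_def by auto
    have Usub: "uncovered E1 N1 N2 N3 \<subseteq> E1" "uncovered E2 P1 P2 P3 \<subseteq> E2" unfolding uncovered_def by auto
    have finU: "finite (uncovered E1 N1 N2 N3)" "finite (uncovered E2 P1 P2 P3)"
      using Usub g1(2) g2(2) by (auto intro: finite_subset)
    show ?thesis
    proof (cases "f1 \<in> M1 \<or> f1 \<in> M2 \<or> f1 \<in> M3")
      case True
      have "uncovered E M1 M2 M3 = uncovered E1 N1 N2 N3 \<union> uncovered E2 P1 P2 P3"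
        using True ff ME disj j(1,4,7,8,9) nE
        unfolding uncovered_def Edef N1_def N2_def N3_def P1_def P2_def P3_def by auto
      moreover have "uncovered E1 N1 N2 N3 \<inter> uncovered E2 P1 P2 P3 = {}" using Usub disj by auto
      ultimately show ?thesis using finU m1 m2 by (simp add: card_Un_disjoint)
    next
      case False
      have eq: "uncovered E M1 M2 M3 = (uncovered E1 N1 N2 N3 - {e1}) \<union> (uncovered E2 P1 P2 P3 - {e2}) \<union> {f1, f2}"
        using False ff ME disj j(1,4,7,8,9) nE
        unfolding uncovered_def Edef N1_def N2_def N3_def P1_def P2_def P3_def by auto
      have in1: "e1 \<in> uncovered E1 N1 N2 N3" "e2 \<in> uncovered E2 P1 P2 P3"
        using False j(1,4) nE ME
        unfolding uncovered_def N1_def N2_def N3_def P1_def P2_def P3_def by auto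
      have d1: "(uncovered E1 N1 N2 N3 - {e1}) \<inter> (uncovered E2 P1 P2 P3 - {e2}) = {}"
        using Usub disj by auto
      have d2: "((uncovered E1 N1 N2 N3 - {e1}) \<union> (uncovered E2 P1 P2 P3 - {e2})) \<inter> {f1, f2} = {}"
        using Usub j(7,8) by auto
      have "card (uncovered E M1 M2 M3) =
         card (uncovered E1 N1 N2 N3 - {e1}) + card (uncovered E2 P1 P2 P3 - {e2}) + 2"
        unfolding eq using d1 d2 finU j(9) by (simp add: card_Un_disjoint)
      moreover have "card (uncovered E1 N1 N2 N3) \<ge> 1" "card (uncovered E2 P1 P2 P3) \<ge> 1"
        using in1 finU by (auto simp: Suc_le_eq card_gt_0_iff)
      ultimately show ?thesis using m1 m2 in1 finU by simp
    qed
  qed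
  have finS: "finite {card (uncovered E M1 M2 M3) | M1 M2 M3.
      one_factor V E ends M1 \<and> one_factor V E ends M2 \<and> one_factor V E ends M3}"
  proof -
    have "{card (uncovered E M1 M2 M3) | M1 M2 M3.
      one_factor V E ends M1 \<and> one_factor V E ends M2 \<and> one_factor V E ends M3} \<subseteq> card ` Pow E"
      unfolding uncovered_def by auto
    then show ?thesis using finE finite_subset by blast
  qed
  show ?thesis unfolding mu3_def[of V E ends]
    apply (rule Min_eqI[OF finS])
    using lower apply blast
    using M cardU[symmetric] by (intro CollectI exI conjI) (rule cardU[symmetric], assumption+)
qed

end
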